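(* Let $G$ be a finite group and let $V=\{1,v_1,v_2,v_3\}$ be a four-group acting on $G$ by automorphisms with $C_G(V)=1$. Put $G_3=C_G(v_3)$. Suppose that $N$ is a normal subgroup of $G$ such that $N\leq G_3$. Then $N\leq Z(G)$.
   Context: $C_G(V)$ is the subgroup of elements fixed by all of $V$, $C_G(v_3)$ the subgroup fixed by $v_3$, and $Z(G)$ the center of $G$. *)

theory Defs
  imports "HOL-Algebra.Algebra"
begin

definition fixed_points :: "('g, 'c) monoid_scheme \<Rightarrow> ('v \<Rightarrow> 'g \<Rightarrow> 'g) \<Rightarrow> 'v set \<Rightarrow> 'g set" where
  "fixed_points G \<phi> S = {g \<in> carrier G. \<forall>v\<in>S. \<phi> v g = g}"

definition group_center :: "('g, 'c) monoid_scheme \<Rightarrow> 'g set" where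
  "group_center G = {z \<in> carrier G. \<forall>x\<in>carrier G. z \<otimes>\<^bsub>G\<^esub> x = x \<otimes>\<^bsub>G\<^esub> z}"

end

theory Submission
  imports Defs
begin

lemma invol_parity:
  assumes "finite S" "\<And>x. x \<in> S \<Longrightarrow> s x \<in> S" "\<And>x. x \<in> S \<Longrightarrow> s (s x) = x"
  shows "odd (card S) = odd (card {x\<in>S. s x = x})"
  using assms
proof (induction "card S" arbitrary: S rule: less_induct)
  case less
  show ?case
  proof (cases "\<forall>x\<in>S. s x = x")
    case True
    then have "{x\<in>S. s x = x} = S" by auto
    then show ?thesis by simp
  next
    case False
    then obtain x where x: "x \<in> S" "s x \<noteq> x" by auto
    define S' where "S' = S - {x, s x}"
    have sx: "s x \<in> S" using less x by auto
    have fin: "finite S'" using less by (simp add: S'_def)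
    have c: "card S = card S' + 2"
    proof -
      have "card S' = card S - card {x, s x}" unfolding S'_def
        using less x sx by (intro card_Diff_subset) auto
      moreover have "card {x, s x} = 2" using x by auto
      moreover have "card {x, s x} \<le> card S" using less x sx by (intro card_mono) auto
      ultimately show ?thesis by linarith
    qed
    have m: "\<And>y. y \<in> S' \<Longrightarrow> s y \<in> S'"
    proof -
      fix y assume y: "y \<in> S'"
      then have "y \<in> S" "y \<noteq> x" "y \<noteq> s x" by (auto simp: S'_def)
      then show "s y \<in> S'" using less(3,4) x
        by (auto simp: S'_def) (metis less(4))+
    qed
    have i: "\<And>y. y \<in> S' \<Longrightarrow> s (s y) = y" using less(4) by (auto simp: S'_def)
    have IH: "odd (card S') = odd (card {y\<in>S'. s y = y})"
      using less(1)[of S'] c fin m i by auto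
    have "{y\<in>S'. s y = y} = {y\<in>S. s y = y}"
      using x less(4)[of x] by (auto simp: S'_def)
    then show ?thesis using IH c by simp
  qed
qed

lemma (in group) cl1: "x \<in> carrier G \<Longrightarrow> g \<in> carrier G \<Longrightarrow> g \<otimes> (inv g \<otimes> x) = x"
  by (simp add: m_assoc[symmetric])
lemma (in group) cl2: "x \<in> carrier G \<Longrightarrow> g \<in> carrier G \<Longrightarrow> inv g \<otimes> (g \<otimes> x) = x"
  by (simp add: m_assoc[symmetric])
lemma (in group) conj_cancel: "x \<in> carrier G \<Longrightarrow> g \<in> carrier G \<Longrightarrow> g \<otimes> (inv g \<otimes> x \<otimes> g) \<otimes> inv g = x"
  by (simp add: m_assoc cl1)
lemma (in group) conj_cancel2: "x \<in> carrier G \<Longrightarrow> g \<in> carrier G \<Longrightarrow> inv g \<otimes> (g \<otimes> x \<otimes> inv g) \<otimes> g = x"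
  by (simp add: m_assoc cl2)
lemma (in group) conj_eq: "x \<in> carrier G \<Longrightarrow> y \<in> carrier G \<Longrightarrow> g \<in> carrier G \<Longrightarrow> inv g \<otimes> x \<otimes> g = inv g \<otimes> y \<otimes> g \<Longrightarrow> x = y"
  by (metis conj_cancel)
lemma (in group) conj_comm: "x \<in> carrier G \<Longrightarrow> g \<in> carrier G \<Longrightarrow> inv g \<otimes> x \<otimes> g = x \<Longrightarrow> x \<otimes> g = g \<otimes> x"
  by (metis cl1 m_assoc inv_closed m_closed)

theorem lemma4p8:
  fixes G :: "('g, 'c) monoid_scheme" and V :: "('v, 'd) monoid_scheme"
    and \<phi> :: "'v \<Rightarrow> 'g \<Rightarrow> 'g" and v1 v2 v3 :: 'v and N :: "'g set"
  assumes "group G" and "finite (carrier G)"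
    and "group V"
    and "carrier V = {\<one>\<^bsub>V\<^esub>, v1, v2, v3}" and "card (carrier V) = 4"
    and "v1 \<otimes>\<^bsub>V\<^esub> v1 = \<one>\<^bsub>V\<^esub>" and "v2 \<otimes>\<^bsub>V\<^esub> v2 = \<one>\<^bsub>V\<^esub>"
    and "v1 \<otimes>\<^bsub>V\<^esub> v2 = v3"
    and "group_action V (carrier G) \<phi>"
    and "\<forall>v\<in>carrier V. \<phi> v \<in> auto G"
    and "fixed_points G \<phi> (carrier V) = {\<one>\<^bsub>G\<^esub>}"
    and "N \<lhd> G"
    and "N \<subseteq> fixed_points G \<phi> {v3}"
  shows "N \<subseteq> group_center G"
proof -
  interpret G: group G by fact
  interpret V: group V by fact
  interpret A: group_action V "carrier G" \<phi> by fact
  define a where "a = \<phi> v1"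
  define b where "b = \<phi> v2"
  define c where "c = \<phi> v3"
  have v1: "v1 \<in> carrier V" and v2: "v2 \<in> carrier V" and v3: "v3 \<in> carrier V" using assms(4) by auto
  have one: "\<And>x. x \<in> carrier G \<Longrightarrow> \<phi> \<one>\<^bsub>V\<^esub> x = x"
    by (metis A.id_eq_one restrict_apply')
  have aa: "\<And>x. x \<in> carrier G \<Longrightarrow> a (a x) = x"
    unfolding a_def using A.composition_rule[OF _ v1 v1] assms(6) one by metis
  have bb: "\<And>x. x \<in> carrier G \<Longrightarrow> b (b x) = x"
    unfolding b_def using A.composition_rule[OF _ v2 v2] assms(7) one by metis
  have cab: "\<And>x. x \<in> carrier G \<Longrightarrow> c x = a (b x)"
    unfolding a_def b_def c_def using A.composition_rule[OF _ v1 v2] assms(8) by metis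
  have aut: "\<And>v. v \<in> carrier V \<Longrightarrow> \<phi> v \<in> hom G G" using assms(10) by (auto simp: auto_def)
  have ahom: "a \<in> hom G G" and bhom: "b \<in> hom G G" and chom: "c \<in> hom G G"
    using aut v1 v2 v3 by (auto simp: a_def b_def c_def)
  have ac: "\<And>x. x \<in> carrier G \<Longrightarrow> a x \<in> carrier G" using ahom by (auto simp: hom_def)
  have bc: "\<And>x. x \<in> carrier G \<Longrightarrow> b x \<in> carrier G" using bhom by (auto simp: hom_def)
  have cc: "\<And>x. x \<in> carrier G \<Longrightarrow> c x \<in> carrier G" using chom by (auto simp: hom_def)
  have amul: "\<And>x y. x \<in> carrier G \<Longrightarrow> y \<in> carrier G \<Longrightarrow> a (x \<otimes>\<^bsub>G\<^esub> y) = a x \<otimes>\<^bsub>G\<^esub> a y"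
    using ahom by (auto simp: hom_def)
  have bmul: "\<And>x y. x \<in> carrier G \<Longrightarrow> y \<in> carrier G \<Longrightarrow> b (x \<otimes>\<^bsub>G\<^esub> y) = b x \<otimes>\<^bsub>G\<^esub> b y"
    using bhom by (auto simp: hom_def)
  have cmul: "\<And>x y. x \<in> carrier G \<Longrightarrow> y \<in> carrier G \<Longrightarrow> c (x \<otimes>\<^bsub>G\<^esub> y) = c x \<otimes>\<^bsub>G\<^esub> c y"
    using chom by (auto simp: hom_def)
  have ainv: "\<And>x. x \<in> carrier G \<Longrightarrow> a (inv\<^bsub>G\<^esub> x) = inv\<^bsub>G\<^esub> (a x)"
    using group_hom.hom_inv[of G G a] ahom G.group_axioms by (simp add: group_hom_axioms_def group_hom_def)
  have binv: "\<And>x. x \<in> carrier G \<Longrightarrow> b (inv\<^bsub>G\<^esub> x) = inv\<^bsub>G\<^esub> (b x)"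
    using group_hom.hom_inv[of G G b] bhom G.group_axioms by (simp add: group_hom_axioms_def group_hom_def)
  have cinv: "\<And>x. x \<in> carrier G \<Longrightarrow> c (inv\<^bsub>G\<^esub> x) = inv\<^bsub>G\<^esub> (c x)"
    using group_hom.hom_inv[of G G c] chom G.group_axioms by (simp add: group_hom_axioms_def group_hom_def)
  have dist: "card {\<one>\<^bsub>V\<^esub>, v1, v2, v3} = 4" using assms(4,5) by simp
  hence d: "\<one>\<^bsub>V\<^esub> \<noteq> v1" "\<one>\<^bsub>V\<^esub> \<noteq> v2" "\<one>\<^bsub>V\<^esub> \<noteq> v3" "v1 \<noteq> v2" "v1 \<noteq> v3" "v2 \<noteq> v3"
    by (auto simp: card_insert_if split: if_splits)
  have i1: "inv\<^bsub>V\<^esub> v1 = v1" using assms(6) v1 V.inv_equality by blast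
  have i2: "inv\<^bsub>V\<^esub> v2 = v2" using assms(7) v2 V.inv_equality by blast
  have "v2 \<otimes>\<^bsub>V\<^esub> v1 \<in> carrier V" using v1 v2 by simp
  moreover have "v2 \<otimes>\<^bsub>V\<^esub> v1 \<noteq> \<one>\<^bsub>V\<^esub>"
  proof
    assume "v2 \<otimes>\<^bsub>V\<^esub> v1 = \<one>\<^bsub>V\<^esub>"
    hence "v2 = inv\<^bsub>V\<^esub> v1" using v1 v2 V.inv_equality[of v2 v1] V.inv_inv by (metis V.inv_equality V.inv_closed V.l_inv)
    thus False using i1 d by simp
  qed
  moreover have "v2 \<otimes>\<^bsub>V\<^esub> v1 \<noteq> v1" using d v1 v2 by (metis V.l_cancel_one' V.r_cancel_one')
  moreover have "v2 \<otimes>\<^bsub>V\<^esub> v1 \<noteq> v2" using d v1 v2 by (metis V.l_cancel_one' V.r_cancel_one')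
  ultimately have v21: "v2 \<otimes>\<^bsub>V\<^esub> v1 = v3" using assms(4) by auto
  have cba: "\<And>x. x \<in> carrier G \<Longrightarrow> c x = b (a x)"
    unfolding a_def b_def c_def using A.composition_rule[OF _ v2 v1] v21 by metis
  have ca: "\<And>x. x \<in> carrier G \<Longrightarrow> c (a x) = b x" using cba aa ac by simp
  have ac': "\<And>x. x \<in> carrier G \<Longrightarrow> a (c x) = b x" using cab aa bc by simp
  have fix1: "\<And>x. x \<in> carrier G \<Longrightarrow> a x = x \<Longrightarrow> b x = x \<Longrightarrow> x = \<one>\<^bsub>G\<^esub>"
  proof -
    fix x assume x: "x \<in> carrier G" "a x = x" "b x = x"
    have "c x = x" using cab x by simp
    hence "x \<in> fixed_points G \<phi> (carrier V)" using x one assms(4)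
      by (auto simp: fixed_points_def a_def b_def c_def)
    thus "x = \<one>\<^bsub>G\<^esub>" using assms(11) by auto
  qed
  define G3 where "G3 = {x \<in> carrier G. c x = x}"
  have G3m: "\<And>x y. x \<in> G3 \<Longrightarrow> y \<in> G3 \<Longrightarrow> x \<otimes>\<^bsub>G\<^esub> y \<in> G3" using cmul by (auto simp: G3_def)
  have G3i: "\<And>x. x \<in> G3 \<Longrightarrow> inv\<^bsub>G\<^esub> x \<in> G3" using cinv by (auto simp: G3_def)
  have G3a: "\<And>x. x \<in> G3 \<Longrightarrow> a x \<in> G3" using ca ac' ac by (auto simp: G3_def) (metis ac')
  \<comment> \<open>Step A: a inverts G3\<close>
  define F where "F x = inv\<^bsub>G\<^esub> x \<otimes>\<^bsub>G\<^esub> a x" for x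
  have FG3: "F ` G3 \<subseteq> G3" using G3m G3i G3a by (auto simp: F_def)
  have Finj: "inj_on F G3"
  proof (rule inj_onI)
    fix x y assume x: "x \<in> G3" and y: "y \<in> G3" and e: "F x = F y"
    have xc: "x \<in> carrier G" and yc: "y \<in> carrier G" using x y by (auto simp: G3_def)
    define z where "z = y \<otimes>\<^bsub>G\<^esub> inv\<^bsub>G\<^esub> x"
    have zG3: "z \<in> G3" using G3m G3i x y by (simp add: z_def)
    hence zc: "z \<in> carrier G" by (simp add: G3_def)
    have "y \<otimes>\<^bsub>G\<^esub> F x \<otimes>\<^bsub>G\<^esub> inv\<^bsub>G\<^esub> (a x) = y \<otimes>\<^bsub>G\<^esub> F y \<otimes>\<^bsub>G\<^esub> inv\<^bsub>G\<^esub> (a x)" using e by simp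
    hence zeq: "z = a y \<otimes>\<^bsub>G\<^esub> inv\<^bsub>G\<^esub> (a x)" using xc yc ac[OF xc] ac[OF yc]
      by (simp add: F_def z_def G.m_assoc) (simp add: G.m_assoc[symmetric])
    have "a z = a (a y \<otimes>\<^bsub>G\<^esub> inv\<^bsub>G\<^esub> (a x))" using zeq by simp
    also have "\<dots> = a (a y) \<otimes>\<^bsub>G\<^esub> a (inv\<^bsub>G\<^esub> (a x))" using amul[OF ac[OF yc] G.inv_closed[OF ac[OF xc]]] .
    also have "\<dots> = y \<otimes>\<^bsub>G\<^esub> inv\<^bsub>G\<^esub> x" using ainv[OF ac[OF xc]] aa[OF xc] aa[OF yc] by simp
    finally have az: "a z = z" by (simp add: z_def)
    have "b z = z" using ac'[OF zc] zG3 az by (simp add: G3_def)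
    hence "z = \<one>\<^bsub>G\<^esub>" using fix1 zc az by blast
    have "y = z \<otimes>\<^bsub>G\<^esub> x" using xc yc by (simp add: z_def G.m_assoc)
    thus "x = y" using \<open>z = \<one>\<^bsub>G\<^esub>\<close> xc by simp
  qed
  have G3fin: "finite G3" using assms(2) by (simp add: G3_def)
  have Fsurj: "F ` G3 = G3" using endo_inj_surj[OF G3fin FG3 Finj] .
  have ainvG3: "\<And>m. m \<in> G3 \<Longrightarrow> a m = inv\<^bsub>G\<^esub> m"
  proof -
    fix m assume "m \<in> G3"
    then obtain x where x: "x \<in> G3" and m: "m = F x" using Fsurj by auto
    have xc: "x \<in> carrier G" using x by (simp add: G3_def)
    have "a m = inv\<^bsub>G\<^esub> (a x) \<otimes>\<^bsub>G\<^esub> x" using m xc ac amul ainv aa by (simp add: F_def)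
    also have "\<dots> = inv\<^bsub>G\<^esub> m" using m xc ac by (simp add: F_def G.inv_mult_group)
    finally show "a m = inv\<^bsub>G\<^esub> m" .
  qed
  have binvG3: "\<And>m. m \<in> G3 \<Longrightarrow> b m = inv\<^bsub>G\<^esub> m"
    using ainvG3 ac' by (auto simp: G3_def) (metis ac')
  have parity2: "\<And>S. finite S \<Longrightarrow> S \<subseteq> carrier G \<Longrightarrow> (\<And>x. x \<in> S \<Longrightarrow> a x \<in> S) \<Longrightarrow> (\<And>x. x \<in> S \<Longrightarrow> b x \<in> S)
      \<Longrightarrow> odd (card S) \<Longrightarrow> \<one>\<^bsub>G\<^esub> \<in> S"
  proof -
    fix S assume fS: "finite S" and sS: "S \<subseteq> carrier G" and aS: "\<And>x. x \<in> S \<Longrightarrow> a x \<in> S"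
      and bS: "\<And>x. x \<in> S \<Longrightarrow> b x \<in> S" and oS: "odd (card S)"
    define S1 where "S1 = {x\<in>S. a x = x}"
    have "odd (card S) = odd (card S1)" unfolding S1_def
    proof (rule invol_parity[OF fS aS])
      fix x assume "x \<in> S" then show "a (a x) = x" using sS aa by blast
    qed
    hence "odd (card S1)" using oS by simp
    moreover have "odd (card S1) = odd (card {x\<in>S1. b x = x})"
    proof (rule invol_parity)
      show "finite S1" using fS by (simp add: S1_def)
      fix x assume "x \<in> S1"
      then have xS: "x \<in> S" and xa: "a x = x" by (auto simp: S1_def)
      have xc: "x \<in> carrier G" using xS sS by blast
      have "a (b x) = b (a x)" using cab[OF xc] cba[OF xc] by simp
      then show "b x \<in> S1" using bS[OF xS] xa by (simp add: S1_def)
      show "b (b x) = x" using \<open>x \<in> S1\<close> bb sS by (auto simp: S1_def)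
    qed
    ultimately have "card {x\<in>S1. b x = x} \<noteq> 0" by presburger
    then have "{x\<in>S1. b x = x} \<noteq> {}" by (metis card.empty)
    then obtain x where "x \<in> S1" "b x = x" by blast
    then have "x = \<one>\<^bsub>G\<^esub>" "x \<in> S" using fix1 sS by (auto simp: S1_def)
    thus "\<one>\<^bsub>G\<^esub> \<in> S" by simp
  qed
  have Godd: "odd (card (carrier G))"
  proof -
    define S1 where "S1 = {x\<in>carrier G. a x = x}"
    have e1: "odd (card (carrier G)) = odd (card S1)" unfolding S1_def
      by (rule invol_parity[OF assms(2) ac aa])
    have "odd (card S1) = odd (card {x\<in>S1. b x = x})"
    proof (rule invol_parity)
      show "finite S1" using assms(2) by (simp add: S1_def)
      fix x assume "x \<in> S1"
      then have xc: "x \<in> carrier G" and xa: "a x = x" by (auto simp: S1_def)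
      have "a (b x) = b (a x)" using cab[OF xc] cba[OF xc] by simp
      then show "b x \<in> S1" using bc[OF xc] xa by (simp add: S1_def)
      show "b (b x) = x" using \<open>x \<in> S1\<close> bb by (auto simp: S1_def)
    qed
    moreover have "{x\<in>S1. b x = x} = {\<one>\<^bsub>G\<^esub>}"
    proof
      show "{x\<in>S1. b x = x} \<subseteq> {\<one>\<^bsub>G\<^esub>}" using fix1 by (auto simp: S1_def)
      have a1: "a \<one>\<^bsub>G\<^esub> = \<one>\<^bsub>G\<^esub>" using group_hom.hom_one[of G G a] ahom G.group_axioms
        by (simp add: group_hom_def group_hom_axioms_def)
      have b1: "b \<one>\<^bsub>G\<^esub> = \<one>\<^bsub>G\<^esub>" using group_hom.hom_one[of G G b] bhom G.group_axioms
        by (simp add: group_hom_def group_hom_axioms_def)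
      show "{\<one>\<^bsub>G\<^esub>} \<subseteq> {x\<in>S1. b x = x}" using a1 b1 by (simp add: S1_def)
    qed
    ultimately show ?thesis using e1 by simp
  qed
  show ?thesis
  proof
    fix n assume nN: "n \<in> N"
    have nc: "n \<in> carrier G" by (rule subgroup.mem_carrier[OF normal_imp_subgroup[OF assms(12)] nN])
    have NG3: "N \<subseteq> G3" using assms(13) by (auto simp: fixed_points_def G3_def c_def)
    define f where "f x = inv\<^bsub>G\<^esub> x \<otimes>\<^bsub>G\<^esub> n \<otimes>\<^bsub>G\<^esub> x" for x
    have fN: "\<And>x. x \<in> carrier G \<Longrightarrow> f x \<in> N"
    proof -
      fix x assume xc: "x \<in> carrier G"
      have "inv\<^bsub>G\<^esub> x \<otimes>\<^bsub>G\<^esub> n \<otimes>\<^bsub>G\<^esub> inv\<^bsub>G\<^esub> (inv\<^bsub>G\<^esub> x) \<in> N"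
        by (rule normal.inv_op_closed2[OF assms(12) G.inv_closed[OF xc] nN])
      hence "inv\<^bsub>G\<^esub> x \<otimes>\<^bsub>G\<^esub> n \<otimes>\<^bsub>G\<^esub> x \<in> N" by (simp only: G.inv_inv[OF xc])
      thus "f x \<in> N" using xc by (simp add: f_def)
    qed
    have fc: "\<And>x. x \<in> carrier G \<Longrightarrow> f x \<in> carrier G" using nc by (simp add: f_def)
    have fa: "\<And>x. x \<in> carrier G \<Longrightarrow> f (a x) = f x"
    proof -
      fix x assume xc: "x \<in> carrier G"
      have nG3: "n \<in> G3" using NG3 nN by blast
      have "a (f x) = a (inv\<^bsub>G\<^esub> x \<otimes>\<^bsub>G\<^esub> n) \<otimes>\<^bsub>G\<^esub> a x"
        unfolding f_def using amul xc nc by simp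
      also have "\<dots> = a (inv\<^bsub>G\<^esub> x) \<otimes>\<^bsub>G\<^esub> a n \<otimes>\<^bsub>G\<^esub> a x"
        using amul xc nc by simp
      also have "\<dots> = inv\<^bsub>G\<^esub> (a x) \<otimes>\<^bsub>G\<^esub> inv\<^bsub>G\<^esub> n \<otimes>\<^bsub>G\<^esub> a x"
        using ainv[OF xc] ainvG3[OF nG3] by simp
      also have "\<dots> = inv\<^bsub>G\<^esub> (f (a x))" using xc nc ac[OF xc] by (simp add: f_def G.inv_mult_group G.m_assoc)
      finally have e: "a (f x) = inv\<^bsub>G\<^esub> (f (a x))" .
      have "a (f x) = inv\<^bsub>G\<^esub> (f x)" by (rule ainvG3[OF subsetD[OF NG3 fN[OF xc]]])
      hence "inv\<^bsub>G\<^esub> (f x) = inv\<^bsub>G\<^esub> (f (a x))" using e by simp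
      thus "f (a x) = f x" by (rule inj_onD[OF G.inv_inj _ fc[OF xc] fc[OF ac[OF xc]], symmetric])
    qed
    have fb: "\<And>x. x \<in> carrier G \<Longrightarrow> f (b x) = f x"
    proof -
      fix x assume xc: "x \<in> carrier G"
      have nG3: "n \<in> G3" using NG3 nN by blast
      have "b (f x) = b (inv\<^bsub>G\<^esub> x \<otimes>\<^bsub>G\<^esub> n) \<otimes>\<^bsub>G\<^esub> b x"
        unfolding f_def using bmul xc nc by simp
      also have "\<dots> = b (inv\<^bsub>G\<^esub> x) \<otimes>\<^bsub>G\<^esub> b n \<otimes>\<^bsub>G\<^esub> b x"
        using bmul xc nc by simp
      also have "\<dots> = inv\<^bsub>G\<^esub> (b x) \<otimes>\<^bsub>G\<^esub> inv\<^bsub>G\<^esub> n \<otimes>\<^bsub>G\<^esub> b x"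
        using binv[OF xc] binvG3[OF nG3] by simp
      also have "\<dots> = inv\<^bsub>G\<^esub> (f (b x))" using xc nc bc[OF xc] by (simp add: f_def G.inv_mult_group G.m_assoc)
      finally have e: "b (f x) = inv\<^bsub>G\<^esub> (f (b x))" .
      have "b (f x) = inv\<^bsub>G\<^esub> (f x)" by (rule binvG3[OF subsetD[OF NG3 fN[OF xc]]])
      hence "inv\<^bsub>G\<^esub> (f x) = inv\<^bsub>G\<^esub> (f (b x))" using e by simp
      thus "f (b x) = f x" by (rule inj_onD[OF G.inv_inj _ fc[OF xc] fc[OF bc[OF xc]], symmetric])
    qed
    define H where "H = {x \<in> carrier G. f x = n}"
    have Hsub: "subgroup H G"
    proof (rule G.subgroupI)
      show "H \<subseteq> carrier G" by (auto simp: H_def)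
      show "H \<noteq> {}" using nc by (auto simp: H_def f_def intro!: exI[of _ "\<one>\<^bsub>G\<^esub>"])
      fix x y assume x: "x \<in> H" and y: "y \<in> H"
      have xc: "x \<in> carrier G" using x by (simp add: H_def)
      have yc: "y \<in> carrier G" using y by (simp add: H_def)
      have fx: "inv\<^bsub>G\<^esub> x \<otimes>\<^bsub>G\<^esub> n \<otimes>\<^bsub>G\<^esub> x = n" using x by (simp add: H_def f_def)
      have fy: "inv\<^bsub>G\<^esub> y \<otimes>\<^bsub>G\<^esub> n \<otimes>\<^bsub>G\<^esub> y = n" using y by (simp add: H_def f_def)
      have "x \<otimes>\<^bsub>G\<^esub> (inv\<^bsub>G\<^esub> x \<otimes>\<^bsub>G\<^esub> n \<otimes>\<^bsub>G\<^esub> x) = x \<otimes>\<^bsub>G\<^esub> n" using fx by simp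
      hence xn: "n \<otimes>\<^bsub>G\<^esub> x = x \<otimes>\<^bsub>G\<^esub> n" using xc nc by (simp add: G.m_assoc[symmetric])
      have "f (inv\<^bsub>G\<^esub> x) = x \<otimes>\<^bsub>G\<^esub> (n \<otimes>\<^bsub>G\<^esub> inv\<^bsub>G\<^esub> x)" using xc nc by (simp add: f_def G.m_assoc)
      also have "\<dots> = (x \<otimes>\<^bsub>G\<^esub> n) \<otimes>\<^bsub>G\<^esub> inv\<^bsub>G\<^esub> x" using xc nc by (simp add: G.m_assoc)
      also have "\<dots> = (n \<otimes>\<^bsub>G\<^esub> x) \<otimes>\<^bsub>G\<^esub> inv\<^bsub>G\<^esub> x" using xn by simp
      also have "\<dots> = n" using xc nc by (simp add: G.m_assoc)
      finally show "inv\<^bsub>G\<^esub> x \<in> H" using xc by (simp add: H_def)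
      have "f (x \<otimes>\<^bsub>G\<^esub> y) = inv\<^bsub>G\<^esub> y \<otimes>\<^bsub>G\<^esub> (inv\<^bsub>G\<^esub> x \<otimes>\<^bsub>G\<^esub> n \<otimes>\<^bsub>G\<^esub> x) \<otimes>\<^bsub>G\<^esub> y"
        using xc yc nc by (simp add: f_def G.inv_mult_group G.m_assoc)
      also have "\<dots> = n" using fx fy by simp
      finally show "x \<otimes>\<^bsub>G\<^esub> y \<in> H" using xc yc by (simp add: H_def)
    qed
    have Hfin: "finite H" using assms(2) by (simp add: H_def)
    have Hodd: "odd (card H)"
    proof -
      have e: "card (rcosets\<^bsub>G\<^esub> H) * card H = card (carrier G)" using G.lagrange[OF Hsub] by (simp add: order_def)
      have "odd (card (rcosets\<^bsub>G\<^esub> H) * card H)" unfolding e by (rule Godd)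
      thus ?thesis by simp
    qed
    have "n \<in> carrier G \<and> (\<forall>g\<in>carrier G. n \<otimes>\<^bsub>G\<^esub> g = g \<otimes>\<^bsub>G\<^esub> n)"
    proof (intro conjI ballI nc)
      fix g assume gc: "g \<in> carrier G"
      define S where "S = {x \<in> carrier G. f x = f g}"
      have img: "(\<lambda>h. h \<otimes>\<^bsub>G\<^esub> g) ` H = S"
      proof
        show "(\<lambda>h. h \<otimes>\<^bsub>G\<^esub> g) ` H \<subseteq> S"
        proof
          fix y assume "y \<in> (\<lambda>h. h \<otimes>\<^bsub>G\<^esub> g) ` H"
          then obtain h where h: "h \<in> H" "y = h \<otimes>\<^bsub>G\<^esub> g" by auto
          have hc: "h \<in> carrier G" and fh: "inv\<^bsub>G\<^esub> h \<otimes>\<^bsub>G\<^esub> n \<otimes>\<^bsub>G\<^esub> h = n" using h by (auto simp: H_def f_def)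
          have "f y = inv\<^bsub>G\<^esub> g \<otimes>\<^bsub>G\<^esub> (inv\<^bsub>G\<^esub> h \<otimes>\<^bsub>G\<^esub> n \<otimes>\<^bsub>G\<^esub> h) \<otimes>\<^bsub>G\<^esub> g"
            using hc gc nc h by (simp add: f_def G.inv_mult_group G.m_assoc)
          also have "\<dots> = f g" using fh by (simp add: f_def)
          finally show "y \<in> S" using h hc gc by (simp add: S_def)
        qed
        show "S \<subseteq> (\<lambda>h. h \<otimes>\<^bsub>G\<^esub> g) ` H"
        proof
          fix y assume y: "y \<in> S"
          have yc: "y \<in> carrier G" using y by (simp add: S_def)
          define h where "h = y \<otimes>\<^bsub>G\<^esub> inv\<^bsub>G\<^esub> g"
          have hc: "h \<in> carrier G" using yc gc by (simp add: h_def)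
          have yh: "y = h \<otimes>\<^bsub>G\<^esub> g" using yc gc by (simp add: h_def G.m_assoc)
          have "f y = f g" using y by (simp add: S_def)
          hence "inv\<^bsub>G\<^esub> g \<otimes>\<^bsub>G\<^esub> (inv\<^bsub>G\<^esub> h \<otimes>\<^bsub>G\<^esub> n \<otimes>\<^bsub>G\<^esub> h) \<otimes>\<^bsub>G\<^esub> g = inv\<^bsub>G\<^esub> g \<otimes>\<^bsub>G\<^esub> n \<otimes>\<^bsub>G\<^esub> g"
            using hc gc nc yh by (simp add: f_def G.inv_mult_group G.m_assoc)
          hence "inv\<^bsub>G\<^esub> h \<otimes>\<^bsub>G\<^esub> n \<otimes>\<^bsub>G\<^esub> h = n"
            by (rule G.conj_eq[OF G.m_closed[OF G.m_closed[OF G.inv_closed[OF hc] nc] hc] nc gc])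
          hence "h \<in> H" using hc by (simp add: H_def f_def)
          thus "y \<in> (\<lambda>h. h \<otimes>\<^bsub>G\<^esub> g) ` H" by (rule image_eqI[where f="\<lambda>h. h \<otimes>\<^bsub>G\<^esub> g", OF yh])
        qed
      qed
      have inj: "inj_on (\<lambda>h. h \<otimes>\<^bsub>G\<^esub> g) H"
      proof (rule inj_onI)
        fix h1 h2 assume "h1 \<in> H" "h2 \<in> H" "h1 \<otimes>\<^bsub>G\<^esub> g = h2 \<otimes>\<^bsub>G\<^esub> g"
        thus "h1 = h2" using gc G.right_cancel[of g h1 h2] by (simp add: H_def)
      qed
      have "card S = card H" using card_image[OF inj] img by simp
      hence "odd (card S)" using Hodd by simp
      moreover have "finite S" using assms(2) by (simp add: S_def)
      moreover have "S \<subseteq> carrier G" by (simp add: S_def)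
      moreover have "\<And>x. x \<in> S \<Longrightarrow> a x \<in> S"
      proof -
        fix x assume x: "x \<in> S"
        hence xc: "x \<in> carrier G" and "f x = f g" by (simp_all add: S_def)
        thus "a x \<in> S" using ac[OF xc] fa[OF xc] by (simp add: S_def)
      qed
      moreover have "\<And>x. x \<in> S \<Longrightarrow> b x \<in> S"
      proof -
        fix x assume x: "x \<in> S"
        hence xc: "x \<in> carrier G" and "f x = f g" by (simp_all add: S_def)
        thus "b x \<in> S" using bc[OF xc] fb[OF xc] by (simp add: S_def)
      qed
      ultimately have "\<one>\<^bsub>G\<^esub> \<in> S" using parity2 by blast
      hence "n = inv\<^bsub>G\<^esub> g \<otimes>\<^bsub>G\<^esub> n \<otimes>\<^bsub>G\<^esub> g" using nc by (simp add: S_def f_def)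
      thus "n \<otimes>\<^bsub>G\<^esub> g = g \<otimes>\<^bsub>G\<^esub> n" using G.conj_comm[OF nc gc] by simp
    qed
    thus "n \<in> group_center G" by (simp add: group_center_def)
  qed
qed

end
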